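(* Let $G$ be a looped simple graph, let $B$ be a transversal of $W(G)$ that is a basis of $M[IAS(G)]$, and let $C$ be a transversal with $B\cap C=\emptyset$. For $v\in V(G)$ let $B(v)$ and $C(v)$ denote the elements of $\tau_G(v)$ lying in $B$ and in $C$, respectively. Let $H$ be a looped simple graph with $V(H)=V(G)$ in which two distinct vertices $v,w$ are adjacent if and only if $B(w)$ belongs to the fundamental circuit of $C(v)$ with respect to $B$ in $M[IAS(G)]$. Then $H$ is well defined (this relation is symmetric in $v,w$), $H$ is locally equivalent to $G$, and there is an induced isomorphism $\beta:M[IAS(G)]\to M[IAS(H)]$ with $\beta(B)=\Phi(H)=\{\phi_H(v):v\in V(H)\}$.
   Context: A looped simple graph is a finite graph in which each vertex carries at most one loop and no two distinct vertices are joined by more than one edge. "Adjacent"/"neighbors" refer only to distinct vertices joined by a non-loop edge; $N_G(v)$ is the set of neighbors of $v$. $A(G)$ is the $V(G)\times V(G)$ matrix over $GF(2)$ with diagonal entry $1$ exactly at looped vertices and off-diagonal entry $1$ exactly for adjacent pairs. $IAS(G)=(I\mid A(G)\mid A(G)+I)$ over $GF(2)$, rows indexed by $V(G)$; the $v$-columns of the three blocks are labelled $\phi_G(v),\chi_G(v),\psi_G(v)$. $M[IAS(G)]$ is the binary column matroid of $IAS(G)$ on $W(G)=\{\phi_G(v),\chi_G(v),\psi_G(v):v\in V(G)\}$. The vertex triple of $v$ is $\tau_G(v)=\{\phi_G(v),\chi_G(v),\psi_G(v)\}$; a transversal meets each vertex triple in exactly one element. For a basis $B$ and element $e\notin B$,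 the fundamental circuit of $e$ with respect to $B$ is the unique circuit contained in $B\cup\{e\}$. Local equivalence: $G_\ell^v$ complements the loop status of $v$; $G_s^v$ complements the adjacency status of every pair of distinct neighbors of $v$; $G_{ns}^v$ does this and also complements the loop status of every neighbor of $v$. $H$ is locally equivalent to $G$ if obtained from $G$ by a finite sequence of such operations. Induced isomorphisms: for each such operation producing $G'$ from $G$ there is a matroid isomorphism $M[IAS(G)]\to M[IAS(G')]$ sending $\alpha_G(x)\mapsto\alpha_{G'}(x)$ for all $\alpha\in\{\phi,\chi,\psi\}$, $x\in V(G)$, except: for $G'=G_\ell^v$, $\chi_G(v)\mapsto\psi_{G'}(v)$, $\psi_G(v)\mapsto\chi_{G'}(v)$; for $G'=G_{ns}^v$ with $v$ unlooped, $\phi_G(v)\mapsto\psi_{G'}(v)$, $\psi_G(v)\mapsto\phi_{G'}(v)$, and with $v$ looped, $\phi_G(v)\mapsto\chi_{G'}(v)$, $\chi_G(v)\mapsto\phi_{G'}(v)$; for $G'=G_s^v$, the same exchange at $v$ as for $G_{ns}^v$ and in addition, for every $w\in N_G(v)$, $\chi_G(w)\mapsto\psi_{G'}(w)$, $\psi_G(w)\mapsto\chi_{G'}(w)$. An induced isomorphism $M[IAS(G)]\to M[IAS(H)]$ is a composition of such isomorphisms along a sequence of operations transforming $G$ into $H$. *)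

theory Defs
  imports Main "HOL-Library.Z2"
begin

text \<open>A looped simple graph on a finite vertex set V is encoded by its GF(2) adjacency
  matrix, viewed as a symmetric relation E on V: E v v holds iff v is looped, and for
  v \<noteq> w, E v w holds iff v and w are adjacent.\<close>

definition looped_simple_graph :: "'a set \<Rightarrow> ('a \<Rightarrow> 'a \<Rightarrow> bool) \<Rightarrow> bool" where
  "looped_simple_graph V E \<longleftrightarrow> finite V \<and> (\<forall>x y. E x y \<longrightarrow> x \<in> V \<and> y \<in> V)
      \<and> (\<forall>x y. E x y = E y x)"

definition nbhd :: "('a \<Rightarrow> 'a \<Rightarrow> bool) \<Rightarrow> 'a \<Rightarrow> 'a set" where
  "nbhd E v = {w. w \<noteq> v \<and> E v w}"

datatype kind = Phi | Chi | Psi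

text \<open>Elements of W(G): (Phi,v) = phi_G(v), (Chi,v) = chi_G(v), (Psi,v) = psi_G(v).\<close>
type_synonym 'a elt = "kind \<times> 'a"

definition W :: "'a set \<Rightarrow> 'a elt set" where
  "W V = UNIV \<times> V"

definition vtriple :: "'a \<Rightarrow> 'a elt set" where
  "vtriple v = {(Phi, v), (Chi, v), (Psi, v)}"

definition Phis :: "'a set \<Rightarrow> 'a elt set" where
  "Phis V = {(Phi, v) | v. v \<in> V}"

text \<open>Columns of IAS(G) = (I | A(G) | A(G)+I) over GF(2); the entry in row w.\<close>
fun col :: "('a \<Rightarrow> 'a \<Rightarrow> bool) \<Rightarrow> 'a elt \<Rightarrow> 'a \<Rightarrow> bit" where
  "col E (Phi, v) w = of_bool (w = v)"
| "col E (Chi, v) w = of_bool (E w v)"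
| "col E (Psi, v) w = of_bool (E w v) + of_bool (w = v)"

definition indep :: "'a set \<Rightarrow> ('a \<Rightarrow> 'a \<Rightarrow> bool) \<Rightarrow> 'a elt set \<Rightarrow> bool" where
  "indep V E S \<longleftrightarrow> S \<subseteq> W V \<and>
     (\<forall>c :: 'a elt \<Rightarrow> bit. (\<forall>w\<in>V. (\<Sum>t\<in>S. c t * col E t w) = 0) \<longrightarrow> (\<forall>t\<in>S. c t = 0))"

definition is_basis :: "'a set \<Rightarrow> ('a \<Rightarrow> 'a \<Rightarrow> bool) \<Rightarrow> 'a elt set \<Rightarrow> bool" where
  "is_basis V E B \<longleftrightarrow> indep V E B \<and> (\<forall>S. B \<subset> S \<and> S \<subseteq> W V \<longrightarrow> \<not> indep V E S)"

definition circuit :: "'a set \<Rightarrow> ('a \<Rightarrow> 'a \<Rightarrow> bool) \<Rightarrow> 'a elt set \<Rightarrow> bool" where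
  "circuit V E C \<longleftrightarrow> C \<subseteq> W V \<and> \<not> indep V E C \<and> (\<forall>D. D \<subset> C \<longrightarrow> indep V E D)"

definition fund_circuit :: "'a set \<Rightarrow> ('a \<Rightarrow> 'a \<Rightarrow> bool) \<Rightarrow> 'a elt set \<Rightarrow> 'a elt \<Rightarrow> 'a elt set" where
  "fund_circuit V E B e = (THE C. circuit V E C \<and> C \<subseteq> insert e B)"

definition transversal :: "'a set \<Rightarrow> 'a elt set \<Rightarrow> bool" where
  "transversal V T \<longleftrightarrow> T \<subseteq> W V \<and> (\<forall>v\<in>V. card (T \<inter> vtriple v) = 1)"

definition pick :: "'a elt set \<Rightarrow> 'a \<Rightarrow> 'a elt" where
  "pick T v = (THE x. x \<in> T \<inter> vtriple v)"

definition loc_l :: "'a \<Rightarrow> ('a \<Rightarrow> 'a \<Rightarrow> bool) \<Rightarrow> ('a \<Rightarrow> 'a \<Rightarrow> bool)" where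
  "loc_l v E = (\<lambda>x y. if x = v \<and> y = v then \<not> E x y else E x y)"

definition loc_s :: "'a \<Rightarrow> ('a \<Rightarrow> 'a \<Rightarrow> bool) \<Rightarrow> ('a \<Rightarrow> 'a \<Rightarrow> bool)" where
  "loc_s v E = (\<lambda>x y. if x \<noteq> y \<and> x \<in> nbhd E v \<and> y \<in> nbhd E v then \<not> E x y else E x y)"

definition loc_ns :: "'a \<Rightarrow> ('a \<Rightarrow> 'a \<Rightarrow> bool) \<Rightarrow> ('a \<Rightarrow> 'a \<Rightarrow> bool)" where
  "loc_ns v E = (\<lambda>x y. if x \<in> nbhd E v \<and> y \<in> nbhd E v then \<not> E x y else E x y)"

definition swap_at :: "'a \<Rightarrow> kind \<Rightarrow> kind \<Rightarrow> 'a elt \<Rightarrow> 'a elt" where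
  "swap_at v a b e = (if snd e = v \<and> fst e = a then (b, v)
                      else if snd e = v \<and> fst e = b then (a, v) else e)"

text \<open>The maps on labels underlying the induced isomorphisms of the three operations
  (applied to the graph E before the operation).\<close>
definition map_l :: "'a \<Rightarrow> ('a \<Rightarrow> 'a \<Rightarrow> bool) \<Rightarrow> 'a elt \<Rightarrow> 'a elt" where
  "map_l v E = swap_at v Chi Psi"

definition map_ns :: "'a \<Rightarrow> ('a \<Rightarrow> 'a \<Rightarrow> bool) \<Rightarrow> 'a elt \<Rightarrow> 'a elt" where
  "map_ns v E = (if E v v then swap_at v Phi Chi else swap_at v Phi Psi)"

definition map_s :: "'a \<Rightarrow> ('a \<Rightarrow> 'a \<Rightarrow> bool) \<Rightarrow> 'a elt \<Rightarrow> 'a elt" where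
  "map_s v E = (\<lambda>e. if snd e \<in> nbhd E v then swap_at (snd e) Chi Psi e else map_ns v E e)"

inductive induced_iso :: "'a set \<Rightarrow> ('a \<Rightarrow> 'a \<Rightarrow> bool) \<Rightarrow> ('a \<Rightarrow> 'a \<Rightarrow> bool)
    \<Rightarrow> ('a elt \<Rightarrow> 'a elt) \<Rightarrow> bool" for V G where
  refl: "induced_iso V G G id"
| step_l: "induced_iso V G E f \<Longrightarrow> v \<in> V \<Longrightarrow> induced_iso V G (loc_l v E) (map_l v E \<circ> f)"
| step_s: "induced_iso V G E f \<Longrightarrow> v \<in> V \<Longrightarrow> induced_iso V G (loc_s v E) (map_s v E \<circ> f)"
| step_ns: "induced_iso V G E f \<Longrightarrow> v \<in> V \<Longrightarrow> induced_iso V G (loc_ns v E) (map_ns v E \<circ> f)"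

inductive locally_equivalent :: "'a set \<Rightarrow> ('a \<Rightarrow> 'a \<Rightarrow> bool) \<Rightarrow> ('a \<Rightarrow> 'a \<Rightarrow> bool) \<Rightarrow> bool"
  for V G where
  refl: "locally_equivalent V G G"
| step_l: "locally_equivalent V G E \<Longrightarrow> v \<in> V \<Longrightarrow> locally_equivalent V G (loc_l v E)"
| step_s: "locally_equivalent V G E \<Longrightarrow> v \<in> V \<Longrightarrow> locally_equivalent V G (loc_s v E)"
| step_ns: "locally_equivalent V G E \<Longrightarrow> v \<in> V \<Longrightarrow> locally_equivalent V G (loc_ns v E)"

end

theory Submission
  imports Defs
begin

declare add_bit_eq_xor[simp del] mult_bit_eq_and[simp del]

lemma bit_add_self[simp]: "(x::bit) + x = 0" by (cases x) simp_all

lemma of_bool_add: "(of_bool P :: bit) + of_bool Q = of_bool (P \<noteq> Q)"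
  by (cases P; cases Q) simp_all

lemma col_ns:
  assumes lsg: "looped_simple_graph V E" and v: "v \<in> V"
  shows "col (loc_ns v E) (map_ns v E e) w = col E e w + col E e v * of_bool (w \<in> nbhd E v)"
proof -
  have sym: "\<And>x y. E x y = E y x" using lsg unfolding looped_simple_graph_def by blast
  obtain kd x where e: "e = (kd, x)" by (cases e)
  show ?thesis unfolding e
    by (cases kd; cases "E v v"; cases "x = v"; cases "w = v")
       (auto simp: map_ns_def swap_at_def loc_ns_def nbhd_def of_bool_add sym)
qed

lemma col_s:
  assumes lsg: "looped_simple_graph V E" and v: "v \<in> V"
  shows "col (loc_s v E) (map_s v E e) w = col E e w + col E e v * of_bool (w \<in> nbhd E v)"
proof -
  have sym: "\<And>x y. E x y = E y x" using lsg unfolding looped_simple_graph_def by blast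
  obtain kd x where e: "e = (kd, x)" by (cases e)
  show ?thesis unfolding e
    by (cases kd; cases "E v v"; cases "x = v"; cases "w = v")
       (auto simp: map_s_def map_ns_def swap_at_def loc_s_def nbhd_def of_bool_add sym)
qed

lemma col_l:
  shows "col (loc_l v E) (map_l v E e) w = col E e w + col E e v * (0::bit)"
proof -
  obtain kd x where e: "e = (kd, x)" by (cases e)
  show ?thesis unfolding e
    by (cases kd; cases "E v v"; cases "x = v"; cases "w = v")
       (auto simp: map_l_def swap_at_def loc_l_def of_bool_add)
qed

lemma W_iff: "S \<subseteq> W V \<longleftrightarrow> (\<forall>e\<in>S. snd e \<in> V)"
  unfolding W_def by auto

lemma indep_transfer:
  assumes inv: "\<And>e. m (m e) = e" and snd: "\<And>e. snd (m e) = snd e"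
  and v: "v \<in> V" and a0: "a v = 0"
  and colf: "\<And>e w. col E' (m e) w = col E e w + col E e v * a w"
  shows "indep V E' (m ` S) = indep V E S"
proof -
  have injm: "inj m" by (metis inv injI)
  have WS: "m ` S \<subseteq> W V \<longleftrightarrow> S \<subseteq> W V" by (auto simp: W_iff snd)
  have sumeq: "(\<Sum>t\<in>m`S. c t * col E' t w) = (\<Sum>s\<in>S. c (m s) * col E s w) + a w * (\<Sum>s\<in>S. c (m s) * col E s v)" for c w
  proof -
    have "(\<Sum>t\<in>m`S. c t * col E' t w) = (\<Sum>s\<in>S. c (m s) * col E' (m s) w)"
      by (simp add: sum.reindex[OF inj_on_subset[OF injm]])
    also have "\<dots> = (\<Sum>s\<in>S. c (m s) * col E s w + a w * (c (m s) * col E s v))"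
      by (simp add: colf algebra_simps)
    also have "\<dots> = (\<Sum>s\<in>S. c (m s) * col E s w) + a w * (\<Sum>s\<in>S. c (m s) * col E s v)"
      by (simp add: sum.distrib sum_distrib_left)
    finally show ?thesis .
  qed
  show ?thesis
  proof
    assume h: "indep V E' (m ` S)"
    show "indep V E S" unfolding indep_def
    proof (intro conjI allI impI ballI)
      show "S \<subseteq> W V" using h WS unfolding indep_def by blast
      fix d :: "'a elt \<Rightarrow> bit" and s
      assume z: "\<forall>w\<in>V. (\<Sum>t\<in>S. d t * col E t w) = 0" and s: "s \<in> S"
      define c where "c = d \<circ> m"
      have cm: "c (m t) = d t" for t by (simp add: c_def inv)
      have "\<forall>w\<in>V. (\<Sum>t\<in>m`S. c t * col E' t w) = 0"
        using z v by (simp add: sumeq cm)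
      hence "\<forall>t\<in>m`S. c t = 0" using h unfolding indep_def by blast
      thus "d s = 0" using s cm by auto
    qed
  next
    assume h: "indep V E S"
    show "indep V E' (m ` S)" unfolding indep_def
    proof (intro conjI allI impI ballI)
      show "m ` S \<subseteq> W V" using h WS unfolding indep_def by blast
      fix c :: "'a elt \<Rightarrow> bit" and t
      assume z: "\<forall>w\<in>V. (\<Sum>t\<in>m`S. c t * col E' t w) = 0" and t: "t \<in> m ` S"
      have "(\<Sum>t\<in>m`S. c t * col E' t v) = 0" using z v by blast
      hence zv: "(\<Sum>s\<in>S. c (m s) * col E s v) = 0" by (simp add: sumeq a0)
      have "\<forall>w\<in>V. (\<Sum>s\<in>S. (c \<circ> m) s * col E s w) = 0" using z by (simp add: sumeq zv)
      hence "\<forall>s\<in>S. (c \<circ> m) s = 0" using h unfolding indep_def by blast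
      thus "c t = 0" using t by auto
    qed
  qed
qed

lemma lsg_ns: "looped_simple_graph V E \<Longrightarrow> looped_simple_graph V (loc_ns v E)"
  unfolding looped_simple_graph_def loc_ns_def nbhd_def by auto
lemma lsg_s: "looped_simple_graph V E \<Longrightarrow> looped_simple_graph V (loc_s v E)"
  unfolding looped_simple_graph_def loc_s_def nbhd_def by auto
lemma lsg_l: "looped_simple_graph V E \<Longrightarrow> v \<in> V \<Longrightarrow> looped_simple_graph V (loc_l v E)"
  unfolding looped_simple_graph_def loc_l_def by auto

lemma swap_inv[simp]: "swap_at v a b (swap_at v a b e) = e"
  unfolding swap_at_def by (cases e) auto
lemma swap_snd[simp]: "snd (swap_at v a b e) = snd e"
  unfolding swap_at_def by auto
lemma map_l_inv: "map_l v E (map_l v E e) = e" "snd (map_l v E e) = snd e"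
  by (simp_all add: map_l_def)
lemma map_ns_inv: "map_ns v E (map_ns v E e) = e" "snd (map_ns v E e) = snd e"
  by (simp_all add: map_ns_def)
lemma map_s_inv: "map_s v E (map_s v E e) = e" "snd (map_s v E e) = snd e"
  unfolding map_s_def map_ns_def swap_at_def nbhd_def by (cases e; auto)+

lemma induced_props:
  assumes "induced_iso V G E f" and "looped_simple_graph V G"
  shows "looped_simple_graph V E \<and> bij f \<and> (\<forall>e. snd (f e) = snd e)
     \<and> (\<forall>S. indep V E (f ` S) = indep V G S) \<and> locally_equivalent V G E"
  using assms(1)
proof induction
  case refl
  then show ?case using assms(2) bij_id by (simp add: locally_equivalent.refl id_def)
next
  case (step_l E f v)
  have it: "indep V (loc_l v E) (map_l v E ` S) = indep V E S" for S
    by (rule indep_transfer[where a="\<lambda>_. 0"]) (use step_l map_l_inv col_l in auto)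
  have b: "bij (map_l v E)" by (metis map_l_inv(1) o_bij comp_apply id_apply[symmetric] ext)
  have "bij (map_l v E \<circ> f)" using step_l b bij_comp by blast
  moreover have "indep V (loc_l v E) ((map_l v E \<circ> f) ` S) = indep V G S" for S
  proof -
    have "(map_l v E \<circ> f) ` S = map_l v E ` (f ` S)" by (simp add: image_comp)
    thus ?thesis using step_l it[of "f ` S"] by simp
  qed
  ultimately show ?case using step_l
    by (auto simp: lsg_l map_l_inv o_def intro: locally_equivalent.step_l)
next
  case (step_s E f v)
  have b: "bij (map_s v E)" by (metis map_s_inv(1) o_bij comp_apply id_apply[symmetric] ext)
  have a0: "of_bool (v \<in> nbhd E v) = (0::bit)" by (simp add: nbhd_def)
  have it: "indep V (loc_s v E) (map_s v E ` S) = indep V E S" for S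
    by (rule indep_transfer[OF map_s_inv _ a0 col_s]) (use step_s in auto)
  have "bij (map_s v E \<circ> f)" using step_s b bij_comp by blast
  moreover have "indep V (loc_s v E) ((map_s v E \<circ> f) ` S) = indep V G S" for S
  proof -
    have "(map_s v E \<circ> f) ` S = map_s v E ` (f ` S)" by (simp add: image_comp)
    thus ?thesis using step_s it[of "f ` S"] by simp
  qed
  ultimately show ?case using step_s
    by (auto simp: lsg_s map_s_inv o_def intro: locally_equivalent.step_s)
next
  case (step_ns E f v)
  have b: "bij (map_ns v E)" by (metis map_ns_inv(1) o_bij comp_apply id_apply[symmetric] ext)
  have a0: "of_bool (v \<in> nbhd E v) = (0::bit)" by (simp add: nbhd_def)
  have it: "indep V (loc_ns v E) (map_ns v E ` S) = indep V E S" for S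
    by (rule indep_transfer[OF map_ns_inv _ a0 col_ns]) (use step_ns in auto)
  have "bij (map_ns v E \<circ> f)" using step_ns b bij_comp by blast
  moreover have "indep V (loc_ns v E) ((map_ns v E \<circ> f) ` S) = indep V G S" for S
  proof -
    have "(map_ns v E \<circ> f) ` S = map_ns v E ` (f ` S)" by (simp add: image_comp)
    thus ?thesis using step_ns it[of "f ` S"] by simp
  qed
  ultimately show ?case using step_ns
    by (auto simp: lsg_ns map_ns_inv o_def intro: locally_equivalent.step_ns)
qed

lemma induced_trans:
  assumes "induced_iso V E1 E2 g" shows "induced_iso V G E1 f \<Longrightarrow> induced_iso V G E2 (g \<circ> f)"
  using assms
proof induction
  case refl then show ?case by simp
next
  case (step_l E f' v) then show ?case by (metis induced_iso.step_l comp_assoc)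
next
  case (step_s E f' v) then show ?case by (metis induced_iso.step_s comp_assoc)
next
  case (step_ns E f' v) then show ?case by (metis induced_iso.step_ns comp_assoc)
qed

lemma Phis_img: "Phis V = (\<lambda>u. (Phi, u)) ` V" unfolding Phis_def by auto

lemma sum_Phis_part:
  assumes "Z \<subseteq> Phis V" "finite V"
  shows "(\<Sum>t\<in>Z. c t * col E t w) = (if (Phi,w) \<in> Z then c (Phi,w) else 0)"
proof -
  have fin: "finite Z" using assms finite_subset by (auto simp: Phis_img)
  have "(\<Sum>t\<in>Z. c t * col E t w) = (\<Sum>t\<in>Z. if (Phi,w) = t then c t else 0)"
  proof (rule sum.cong)
    fix t assume "t \<in> Z"
    then obtain u where "t = (Phi,u)" using assms unfolding Phis_def by auto
    then show "c t * col E t w = (if (Phi,w) = t then c t else 0)" by auto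
  qed simp
  also have "\<dots> = (if (Phi,w) \<in> Z then c (Phi,w) else 0)"
    by (rule sum.delta'[OF fin])
  finally show ?thesis .
qed

lemma sum_Phi:
  assumes "fst e \<noteq> Phi" "Y \<subseteq> insert e (Phis V)" "finite V"
  shows "(\<Sum>t\<in>Y. c t * col E t w) = (if e \<in> Y then c e * col E e w else 0) + (if (Phi,w) \<in> Y then c (Phi,w) else 0)"
proof -
  have fin: "finite Y" using assms finite_subset by (auto simp: Phis_img)
  have sub: "Y - {e} \<subseteq> Phis V" using assms by auto
  have ne: "(Phi, w) \<noteq> e" using assms by auto
  show ?thesis
  proof (cases "e \<in> Y")
    case True
    then show ?thesis using sum.remove[OF fin True, of "\<lambda>t. c t * col E t w"] sum_Phis_part[OF sub assms(3), of c E w] ne by simp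
  next
    case False
    then have "Y - {e} = Y" by auto
    then show ?thesis using False sum_Phis_part[OF sub assms(3)] by simp
  qed
qed

lemma bit_sum0: "(a::bit) + b = 0 \<Longrightarrow> b = a"
  by (cases a; cases b) simp_all

lemma dep_Phi:
  assumes "fst e \<noteq> Phi" "Y \<subseteq> insert e (Phis V)" "finite V"
    and z: "\<forall>w\<in>V. (\<Sum>t\<in>Y. c t * col E t w) = 0" and t0: "t0 \<in> Y" "c t0 \<noteq> 0"
  shows "e \<in> Y \<and> c e = 1 \<and> (\<forall>u\<in>V. col E e u = 1 \<longrightarrow> (Phi,u) \<in> Y)"
proof -
  have eq: "(if (Phi,w) \<in> Y then c (Phi,w) else 0) = (if e \<in> Y then c e * col E e w else 0)" if "w \<in> V" for w
  proof -
    have "(if e \<in> Y then c e * col E e w else 0) + (if (Phi,w) \<in> Y then c (Phi,w) else 0) = 0"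
      using z that sum_Phi[OF assms(1-3), of c E w] by simp
    thus ?thesis by (rule bit_sum0)
  qed
  have ce: "e \<in> Y \<and> c e = 1"
  proof (rule ccontr)
    assume "\<not> ?thesis"
    hence "(if e \<in> Y then c e * col E e w else 0) = 0" for w by auto
    moreover have "t0 \<noteq> e" using t0 \<open>\<not> (e \<in> Y \<and> c e = 1)\<close> by auto
    then obtain u where "t0 = (Phi,u)" "u \<in> V" using t0 assms(1,2) unfolding Phis_def by auto
    ultimately show False using eq[of u] t0 by auto
  qed
  moreover have "\<forall>u\<in>V. col E e u = 1 \<longrightarrow> (Phi,u) \<in> Y"
  proof (intro ballI impI)
    fix u assume "u \<in> V" "col E e u = 1"
    then show "(Phi,u) \<in> Y" using eq[of u] ce by (cases "(Phi,u) \<in> Y") auto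
  qed
  ultimately show ?thesis by blast
qed

definition S0 :: "'a set \<Rightarrow> ('a \<Rightarrow> 'a \<Rightarrow> bool) \<Rightarrow> 'a elt \<Rightarrow> 'a elt set" where
  "S0 V E e = insert e {(Phi,u) | u. u \<in> V \<and> col E e u = 1}"

lemma S0_circuit_iff:
  assumes "fst e \<noteq> Phi" "snd e \<in> V" "finite V"
  shows "(circuit V E X \<and> X \<subseteq> insert e (Phis V)) \<longleftrightarrow> X = S0 V E e"
proof -
  have S0sub: "S0 V E e \<subseteq> insert e (Phis V)" unfolding S0_def Phis_def by auto
  have S0W: "S0 V E e \<subseteq> W V" using assms(2) unfolding S0_def W_def by (cases e) auto
  have dep: "\<not> indep V E (S0 V E e)"
  proof
    assume h: "indep V E (S0 V E e)"
    have z1: "\<forall>w\<in>V. (\<Sum>t\<in>S0 V E e. (\<lambda>_. 1::bit) t * col E t w) = 0"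
    proof
      fix w assume w: "w \<in> V"
      show "(\<Sum>t\<in>S0 V E e. (\<lambda>_. 1::bit) t * col E t w) = 0"
        using sum_Phi[OF assms(1) S0sub assms(3), of "\<lambda>_. 1" E w] w
        by (cases "col E e w") (auto simp: S0_def)
    qed
    have all: "\<forall>c. (\<forall>w\<in>V. (\<Sum>t\<in>S0 V E e. c t * col E t w) = 0) \<longrightarrow> (\<forall>t\<in>S0 V E e. c t = 0)"
      using h unfolding indep_def by blast
    from mp[OF spec[OF all, of "\<lambda>_. 1"] z1] have "\<forall>t\<in>S0 V E e. (1::bit) = 0" by simp
    moreover have "e \<in> S0 V E e" by (simp add: S0_def)
    ultimately show False by blast
  qed
  have minimal: "S0 V E e \<subseteq> Y" if hY: "Y \<subseteq> insert e (Phis V)" "Y \<subseteq> W V" "\<not> indep V E Y" for Y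
  proof -
    obtain c t0 where z: "\<forall>w\<in>V. (\<Sum>t\<in>Y. c t * col E t w) = 0" and t0: "t0 \<in> Y" "c t0 \<noteq> 0"
      using hY unfolding indep_def by blast
    from dep_Phi[OF assms(1) hY(1) assms(3) z t0] show ?thesis unfolding S0_def by auto
  qed
  have circ: "circuit V E (S0 V E e)"
    unfolding circuit_def
  proof (intro conjI allI impI S0W dep)
    fix D assume D: "D \<subset> S0 V E e"
    show "indep V E D"
    proof (rule ccontr)
      assume "\<not> indep V E D"
      moreover have "D \<subseteq> insert e (Phis V)" "D \<subseteq> W V" using D S0sub S0W by auto
      ultimately have "S0 V E e \<subseteq> D" using minimal by blast
      thus False using D by blast
    qed
  qed
  show ?thesis
  proof
    assume h: "circuit V E X \<and> X \<subseteq> insert e (Phis V)"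
    have hX: "X \<subseteq> W V" "\<not> indep V E X" "\<forall>D. D \<subset> X \<longrightarrow> indep V E D"
      using h unfolding circuit_def by auto
    have "S0 V E e \<subseteq> X" using minimal[OF _ hX(1,2)] h by blast
    moreover have "\<not> S0 V E e \<subset> X" using hX(3) dep by blast
    ultimately show "X = S0 V E e" by blast
  next
    assume "X = S0 V E e"
    then show "circuit V E X \<and> X \<subseteq> insert e (Phis V)" using circ S0sub by simp
  qed
qed

lemma circuit_transfer:
  assumes inj: "inj f" and snd: "\<forall>e. snd (f e) = snd e" and ind: "\<And>S. indep V E (f ` S) = indep V G S"
  shows "circuit V E (f ` X) = circuit V G X"
proof -
  have WS: "f ` X \<subseteq> W V \<longleftrightarrow> X \<subseteq> W V" by (auto simp: W_iff snd)
  have "(\<forall>D. D \<subset> f ` X \<longrightarrow> indep V E D) \<longleftrightarrow> (\<forall>D. D \<subset> X \<longrightarrow> indep V G D)"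
  proof
    assume h: "\<forall>D. D \<subset> f ` X \<longrightarrow> indep V E D"
    show "\<forall>D. D \<subset> X \<longrightarrow> indep V G D"
    proof (intro allI impI)
      fix D assume D: "D \<subset> X"
      have "f ` D \<subseteq> f ` X" using D by blast
      moreover have "f ` D \<noteq> f ` X" using D inj by (simp add: inj_image_eq_iff)
      ultimately have "f ` D \<subset> f ` X" by (rule psubsetI)
      hence "indep V E (f ` D)" using h by blast
      thus "indep V G D" using ind[of D] by simp
    qed
  next
    assume h: "\<forall>D. D \<subset> X \<longrightarrow> indep V G D"
    show "\<forall>D. D \<subset> f ` X \<longrightarrow> indep V E D"
    proof (intro allI impI)
      fix D assume D: "D \<subset> f ` X"
      then obtain D' where D': "D' \<subseteq> X" "D = f ` D'" by (meson psubset_imp_subset subset_imageE)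
      have "D' \<subset> X" using D D' by blast
      hence "indep V G D'" using h by blast
      thus "indep V E D" using ind[of D'] D' by simp
    qed
  qed
  thus ?thesis unfolding circuit_def using WS ind[of X] by simp
qed

definition Tk :: "'a set \<Rightarrow> ('a \<Rightarrow> kind) \<Rightarrow> 'a elt set" where
  "Tk V k = {(k v, v) | v. v \<in> V}"

definition D1 :: "('a \<Rightarrow> 'a \<Rightarrow> bool) \<Rightarrow> 'a \<Rightarrow> kind \<Rightarrow> bool" where
  "D1 E v kd \<longleftrightarrow> (kd = Chi \<and> E v v) \<or> (kd = Psi \<and> \<not> E v v)"

lemma Tk_img: "Tk V k = (\<lambda>v. (k v, v)) ` V" unfolding Tk_def by auto

lemma Tk_image:
  assumes "\<And>e. snd (m e) = snd e"
  shows "m ` Tk V k = Tk V (\<lambda>u. fst (m (k u, u)))"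
proof -
  have "m (k u, u) = (fst (m (k u, u)), u)" for u using assms[of "(k u, u)"] by (cases "m (k u, u)") auto
  thus ?thesis unfolding Tk_img image_comp o_def by metis
qed

lemma one_step: "v \<in> V \<Longrightarrow> induced_iso V E (loc_ns v E) (map_ns v E)"
  by (metis induced_iso.step_ns induced_iso.refl comp_id)

lemma D1_step:
  assumes "D1 E v (k v)"
  shows "map_ns v E ` Tk V k = Tk V (k(v := Phi))"
proof -
  have "(\<lambda>u. fst (map_ns v E (k u, u))) = k(v := Phi)"
    using assms by (auto simp: map_ns_def swap_at_def D1_def fun_eq_iff)
  thus ?thesis using Tk_image[of "map_ns v E" V k] map_ns_inv(2) by metis
qed

lemma D0_step:
  assumes "k w \<noteq> Phi" "\<not> D1 E w (k w)"
  shows "map_ns w E ` Tk V k = Tk V k"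
proof -
  have "(\<lambda>u. fst (map_ns w E (k u, u))) = k"
    using assms by (cases "k w") (auto simp: map_ns_def swap_at_def D1_def fun_eq_iff)
  thus ?thesis using Tk_image[of "map_ns w E" V k] map_ns_inv(2) by metis
qed

lemma D0_dep:
  assumes lsg: "looped_simple_graph V E" and v: "v \<in> V" and kv: "k v \<noteq> Phi" "\<not> D1 E v (k v)"
    and nb: "\<forall>u\<in>nbhd E v. k u = Phi"
  shows "\<not> indep V E (Tk V k)"
proof
  assume h: "indep V E (Tk V k)"
  have fin: "finite V" and sym: "\<And>x y. E x y = E y x" and sup: "\<And>x y. E x y \<Longrightarrow> x \<in> V \<and> y \<in> V"
    using lsg unfolding looped_simple_graph_def by blast+
  define e where "e = (k v, v)"
  define Y where "Y = insert e {(Phi,u) | u. u \<in> nbhd E v}"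
  have eT: "e \<in> Tk V k" using v unfolding e_def Tk_def by auto
  have YT: "Y \<subseteq> Tk V k" using eT nb sup unfolding Y_def Tk_def nbhd_def by force
  have YP: "Y \<subseteq> insert e (Phis V)" using sup unfolding Y_def Phis_def nbhd_def by auto
  have fe: "fst e \<noteq> Phi" using kv by (simp add: e_def)
  have finT: "finite (Tk V k)" using fin by (simp add: Tk_img)
  have cole: "col E e w = of_bool (w \<in> nbhd E v)" for w
    using kv by (cases "k v") (auto simp: e_def D1_def nbhd_def sym of_bool_add)
  define c where "c t = (of_bool (t \<in> Y) :: bit)" for t
  have "\<forall>w\<in>V. (\<Sum>t\<in>Tk V k. c t * col E t w) = 0"
  proof
    fix w assume w: "w \<in> V"
    have "(\<Sum>t\<in>Tk V k. c t * col E t w) = (\<Sum>t\<in>Y. c t * col E t w)"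
      by (rule sum.mono_neutral_right[OF finT YT]) (auto simp: c_def)
    also have "\<dots> = (if e \<in> Y then c e * col E e w else 0) + (if (Phi,w) \<in> Y then c (Phi,w) else 0)"
      by (rule sum_Phi[OF fe YP fin])
    also have "\<dots> = of_bool (w \<in> nbhd E v) + of_bool (w \<in> nbhd E v)"
      using fe by (auto simp: c_def Y_def cole)
    finally show "(\<Sum>t\<in>Tk V k. c t * col E t w) = 0" by simp
  qed
  hence "\<forall>t\<in>Tk V k. c t = 0" using h unfolding indep_def by blast
  thus False using eT by (auto simp: c_def Y_def)
qed

lemma reduce_aux:
  assumes fin: "finite V"
  shows "\<forall>E k. card {v\<in>V. k v \<noteq> Phi} = n \<longrightarrow> looped_simple_graph V E \<longrightarrow> indep V E (Tk V k)
           \<longrightarrow> (\<exists>E' g. induced_iso V E E' g \<and> g ` Tk V k = Phis V)"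
proof (induction n rule: less_induct)
  case (less n)
  have D1case: "\<exists>E' g. induced_iso V E1 E' g \<and> g ` Tk V k1 = Phis V"
    if c1: "card {v\<in>V. k1 v \<noteq> Phi} = n" "looped_simple_graph V E1" "indep V E1 (Tk V k1)"
      "v \<in> V" "D1 E1 v (k1 v)" for E1 k1 v
  proof -
    define E2 where "E2 = loc_ns v E1"
    define m where "m = map_ns v E1"
    have st: "induced_iso V E1 E2 m" unfolding E2_def m_def by (rule one_step[OF c1(4)])
    have props: "looped_simple_graph V E2 \<and> bij m \<and> (\<forall>e. snd (m e) = snd e)
     \<and> (\<forall>S. indep V E2 (m ` S) = indep V E1 S) \<and> locally_equivalent V E1 E2"
      by (rule induced_props[OF st c1(2)])
    have img: "m ` Tk V k1 = Tk V (k1(v := Phi))" unfolding m_def by (rule D1_step[where E=E1 and v=v and k=k1, OF c1(5)])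
    have ind2: "indep V E2 (Tk V (k1(v := Phi)))" using props img c1(3) by metis
    have kv: "k1 v \<noteq> Phi" using c1(5) by (auto simp: D1_def)
    have "{u\<in>V. (k1(v := Phi)) u \<noteq> Phi} = {u\<in>V. k1 u \<noteq> Phi} - {v}" by auto
    moreover have "v \<in> {u\<in>V. k1 u \<noteq> Phi}" using kv c1(4) by auto
    moreover have "finite {u\<in>V. k1 u \<noteq> Phi}" using fin by auto
    ultimately have "card {u\<in>V. (k1(v := Phi)) u \<noteq> Phi} < n"
      using c1(1) by (metis card_Diff1_less)
    then obtain E' g where g: "induced_iso V E2 E' g" "g ` Tk V (k1(v := Phi)) = Phis V"
      using less.IH props ind2 by blast
    have "induced_iso V E1 E' (g \<circ> m)" by (rule induced_trans[OF g(1) st])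
    moreover have "(g \<circ> m) ` Tk V k1 = Phis V" using g(2) img by (metis image_comp)
    ultimately show ?thesis by blast
  qed
  show ?case
  proof (intro allI impI)
    fix E k
    assume c: "card {v\<in>V. k v \<noteq> Phi} = n" "looped_simple_graph V E" "indep V E (Tk V k)"
    show "\<exists>E' g. induced_iso V E E' g \<and> g ` Tk V k = Phis V"
    proof (cases "{v\<in>V. k v \<noteq> Phi} = {}")
      case True
      hence "Tk V k = Phis V" unfolding Tk_def Phis_def by auto
      thus ?thesis using induced_iso.refl[of V E] by (metis image_id id_apply)
    next
      case False
      then obtain v where v: "v \<in> V" "k v \<noteq> Phi" by auto
      show ?thesis
      proof (cases "D1 E v (k v)")
        case True
        then show ?thesis using D1case[OF c v(1)] by blast
      next
        case nD1: False
        have sym: "\<And>x y. E x y = E y x" and sup: "\<And>x y. E x y \<Longrightarrow> x \<in> V \<and> y \<in> V"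
          using c(2) unfolding looped_simple_graph_def by blast+
        obtain w where w: "w \<in> nbhd E v" "k w \<noteq> Phi"
          using D0_dep[where k=k, OF c(2) v nD1] c(3) by blast
        have wV: "w \<in> V" using w sup unfolding nbhd_def by blast
        show ?thesis
        proof (cases "D1 E w (k w)")
          case True
          then show ?thesis using D1case[OF c wV] by blast
        next
          case nD1w: False
          define E1 where "E1 = loc_ns w E"
          define m where "m = map_ns w E"
          have st: "induced_iso V E E1 m" unfolding E1_def m_def by (rule one_step[OF wV])
          have props: "looped_simple_graph V E1 \<and> bij m \<and> (\<forall>e. snd (m e) = snd e)
           \<and> (\<forall>S. indep V E1 (m ` S) = indep V E S) \<and> locally_equivalent V E E1"
            by (rule induced_props[OF st c(2)])
          have img: "m ` Tk V k = Tk V k" unfolding m_def by (rule D0_step[where E=E and w=w and k=k, OF w(2) nD1w])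
          have ind1: "indep V E1 (Tk V k)" using props img c(3) by metis
          have vw: "v \<in> nbhd E w" using w sym unfolding nbhd_def by auto
          have "E1 v v = (\<not> E v v)" using vw unfolding E1_def loc_ns_def by auto
          hence "D1 E1 v (k v)" using v(2) nD1 by (cases "k v") (auto simp: D1_def)
          then obtain E' g where g: "induced_iso V E1 E' g" "g ` Tk V k = Phis V"
            using D1case[OF c(1) _ ind1 v(1)] props by blast
          have "induced_iso V E E' (g \<circ> m)" by (rule induced_trans[OF g(1) st])
          moreover have "(g \<circ> m) ` Tk V k = Phis V" using g(2) img by (metis image_comp)
          ultimately show ?thesis by blast
        qed
      qed
    qed
  qed
qed

lemma reduce:
  assumes "looped_simple_graph V E" "indep V E (Tk V k)"
  shows "\<exists>E' g. induced_iso V E E' g \<and> g ` Tk V k = Phis V"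
  using reduce_aux[of V "card {v\<in>V. k v \<noteq> Phi}"] assms unfolding looped_simple_graph_def by blast

lemma vtriple_eq: "vtriple v = {e. snd e = v}"
  unfolding vtriple_def by (auto, case_tac a, auto)

lemma pick_props:
  assumes "transversal V T" "v \<in> V"
  shows "pick T v \<in> T \<and> snd (pick T v) = v \<and> (\<forall>y\<in>T. snd y = v \<longrightarrow> y = pick T v)"
proof -
  have "card (T \<inter> vtriple v) = 1" using assms unfolding transversal_def by blast
  then obtain x where x: "T \<inter> vtriple v = {x}" by (rule card_1_singletonE)
  have "pick T v = x" unfolding pick_def using x by auto
  thus ?thesis using x by (auto simp: vtriple_eq)
qed

lemma transversal_Tk:
  assumes "transversal V T"
  shows "T = Tk V (\<lambda>v. fst (pick T v))"
proof
  show "T \<subseteq> Tk V (\<lambda>v. fst (pick T v))"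
  proof
    fix y assume y: "y \<in> T"
    hence yV: "snd y \<in> V" using assms unfolding transversal_def W_def by auto
    hence "y = pick T (snd y)" using pick_props[OF assms yV] y by blast
    thus "y \<in> Tk V (\<lambda>v. fst (pick T v))" unfolding Tk_def using yV pick_props[OF assms yV]
      by (metis (mono_tags, lifting) mem_Collect_eq prod.collapse)
  qed
next
  show "Tk V (\<lambda>v. fst (pick T v)) \<subseteq> T"
    unfolding Tk_def using pick_props[OF assms] by (auto, metis prod.collapse)
qed

definition toggle :: "'a set \<Rightarrow> ('a \<Rightarrow> 'a \<Rightarrow> bool) \<Rightarrow> ('a \<Rightarrow> 'a \<Rightarrow> bool)" where
  "toggle L E = (\<lambda>x y. if x = y \<and> x \<in> L then \<not> E x y else E x y)"

lemma toggle_lemma: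
  assumes "finite L"
  shows "L \<subseteq> V \<Longrightarrow> induced_iso V G E f \<Longrightarrow>
    \<exists>g. induced_iso V G (toggle L E) (g \<circ> f) \<and> (\<forall>u. g (Phi,u) = (Phi,u))"
  using assms
proof (induction L rule: finite_induct)
  case empty
  have "toggle {} E = E" by (simp add: toggle_def fun_eq_iff)
  then show ?case using empty by (metis id_comp id_apply)
next
  case (insert x L)
  have "L \<subseteq> V" using insert by auto
  then obtain g where g: "induced_iso V G (toggle L E) (g \<circ> f)" "\<forall>u. g (Phi,u) = (Phi,u)"
    using insert.IH insert.prems(2) by blast
  have eq: "loc_l x (toggle L E) = toggle (insert x L) E"
    using insert(2) by (auto simp: toggle_def loc_l_def fun_eq_iff)
  have "induced_iso V G (toggle (insert x L) E) (map_l x (toggle L E) \<circ> (g \<circ> f))"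
    using induced_iso.step_l[OF g(1), of x] insert eq by auto
  moreover have "\<forall>u. (map_l x (toggle L E) \<circ> g) (Phi,u) = (Phi,u)"
    using g(2) by (simp add: map_l_def swap_at_def)
  ultimately show ?case by (metis comp_assoc)
qed

theorem corollary4p2:
  fixes V :: "'a set" and G H :: "'a \<Rightarrow> 'a \<Rightarrow> bool" and B C :: "'a elt set"
  assumes "looped_simple_graph V G"
    and "transversal V B" and "is_basis V G B"
    and "transversal V C" and "B \<inter> C = {}"
    and "looped_simple_graph V H"
    and "\<And>v w. v \<in> V \<Longrightarrow> w \<in> V \<Longrightarrow> v \<noteq> w \<Longrightarrow>
           H v w \<longleftrightarrow> pick B w \<in> fund_circuit V G B (pick C v)"
  shows "(\<forall>v\<in>V. \<forall>w\<in>V. v \<noteq> w \<longrightarrow>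
            (pick B w \<in> fund_circuit V G B (pick C v) \<longleftrightarrow>
             pick B v \<in> fund_circuit V G B (pick C w)))
         \<and> locally_equivalent V G H
         \<and> (\<exists>\<beta>. induced_iso V G H \<beta> \<and> \<beta> ` B = Phis V)"
proof -
  note lsgG = assms(1) and trB = assms(2) and trC = assms(4) and disj = assms(5) and lsgH = assms(6)
    and Hdef = assms(7)
  have fin: "finite V" using lsgG unfolding looped_simple_graph_def by blast
  define kB where "kB v = fst (pick B v)" for v
  have BT: "B = Tk V kB" unfolding kB_def by (rule transversal_Tk[OF trB])
  have indB: "indep V G B" using assms(3) unfolding is_basis_def by blast
  obtain E f where Ef: "induced_iso V G E f" "f ` B = Phis V"
    using reduce[OF lsgG indB[unfolded BT]] BT by blast
  have props: "looped_simple_graph V E \<and> bij f \<and> (\<forall>e. snd (f e) = snd e)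
     \<and> (\<forall>S. indep V E (f ` S) = indep V G S) \<and> locally_equivalent V G E"
    by (rule induced_props[OF Ef(1) lsgG])
  have lsgE: "looped_simple_graph V E" and bijf: "bij f" and sndf: "\<forall>e. snd (f e) = snd e"
    and indf: "\<And>S. indep V E (f ` S) = indep V G S" using props by simp_all
  have sndf1: "\<And>e. snd (f e) = snd e" using sndf by blast
  have injf: "inj f" using bijf bij_is_inj by blast
  have surjf: "surj f" using bijf bij_is_surj by blast
  have symE: "\<And>x y. E x y = E y x"
    using lsgE unfolding looped_simple_graph_def by metis
  have supE: "\<And>x y. E x y \<Longrightarrow> x \<in> V \<and> y \<in> V"
    using lsgE unfolding looped_simple_graph_def by metis
  have fB: "f (pick B w) = (Phi, w)" if "w \<in> V" for w
  proof -
    have "pick B w \<in> B" "snd (pick B w) = w" using pick_props[OF trB that] by blast+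
    have a: "f (pick B w) \<in> Phis V" using Ef(2) \<open>pick B w \<in> B\<close> by blast
    have b: "snd (f (pick B w)) = w" using sndf1[of "pick B w"] \<open>snd (pick B w) = w\<close> by simp
    from a obtain u where "f (pick B w) = (Phi, u)" unfolding Phis_def by blast
    thus ?thesis using b by simp
  qed
  have fC: "fst (f (pick C v)) \<noteq> Phi \<and> snd (f (pick C v)) = v" if "v \<in> V" for v
  proof -
    have pc: "pick C v \<in> C" "snd (pick C v) = v" using pick_props[OF trC that] by blast+
    have "pick B v \<in> B" using pick_props[OF trB that] by blast
    have "pick C v \<noteq> pick B v"
    proof
      assume "pick C v = pick B v"
      hence "pick C v \<in> B \<inter> C" using pc(1) \<open>pick B v \<in> B\<close> by simp
      thus False using disj by simp
    qed
    have ne: "f (pick C v) \<noteq> (Phi, v)"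
    proof
      assume "f (pick C v) = (Phi, v)"
      hence "f (pick C v) = f (pick B v)" using fB[OF that] by simp
      hence "pick C v = pick B v" by (rule injD[OF injf])
      thus False using \<open>pick C v \<noteq> pick B v\<close> by contradiction
    qed
    have sv: "snd (f (pick C v)) = v" using pc sndf1[of "pick C v"] by simp
    show ?thesis
    proof (cases "f (pick C v)")
      case (Pair a b) then show ?thesis using ne sv by auto
    qed
  qed
  have key: "pick B w \<in> fund_circuit V G B (pick C v) \<longleftrightarrow> E w v"
    if vw: "v \<in> V" "w \<in> V" "v \<noteq> w" for v w
  proof -
    define e where "e = pick C v"
    define S where "S = S0 V E (f e)"
    have fe: "fst (f e) \<noteq> Phi" "snd (f e) \<in> V" using fC[OF vw(1)] vw by (auto simp: e_def)
    define X0 where "X0 = f -` S"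
    have fX0: "f ` X0 = S" unfolding X0_def using surjf by (simp add: surj_image_vimage_eq)
    have charX: "(circuit V G X \<and> X \<subseteq> insert e B) \<longleftrightarrow> f ` X = S" for X
    proof -
      have c1: "circuit V G X \<longleftrightarrow> circuit V E (f ` X)"
        using circuit_transfer[OF injf sndf indf] by simp
      have c2: "X \<subseteq> insert e B \<longleftrightarrow> f ` X \<subseteq> insert (f e) (Phis V)"
        using inj_image_subset_iff[OF injf, of X "insert e B"] Ef(2) by simp
      have c3: "(circuit V E (f ` X) \<and> f ` X \<subseteq> insert (f e) (Phis V)) \<longleftrightarrow> f ` X = S"
        unfolding S_def by (rule S0_circuit_iff[where E=E, OF fe fin])
      show ?thesis by (simp only: c1 c2 c3)
    qed
    have "fund_circuit V G B e = X0"
      unfolding fund_circuit_def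
    proof (rule the_equality)
      show "circuit V G X0 \<and> X0 \<subseteq> insert e B" using charX fX0 by blast
    next
      fix X assume "circuit V G X \<and> X \<subseteq> insert e B"
      hence "f ` X = f ` X0" using charX fX0 by blast
      thus "X = X0" using injf by (simp add: inj_image_eq_iff)
    qed
    hence "pick B w \<in> fund_circuit V G B e \<longleftrightarrow> (Phi, w) \<in> S"
      using fB[OF vw(2)] X0_def by simp
    also have "\<dots> \<longleftrightarrow> col E (f e) w = 1"
    proof -
      have "(Phi, w) \<noteq> f e" using fe(1) by (metis fst_conv)
      thus ?thesis using vw(2) unfolding S_def S0_def by simp
    qed
    also have "\<dots> \<longleftrightarrow> E w v"
    proof -
      obtain kd where "f e = (kd, v)" "kd \<noteq> Phi" using fC[OF vw(1)] unfolding e_def by (metis prod.collapse)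
      thus ?thesis using vw(3) by (cases kd) auto
    qed
    finally show ?thesis unfolding e_def .
  qed
  define L where "L = {x\<in>V. H x x \<noteq> E x x}"
  have finL: "finite L" using fin unfolding L_def by auto
  obtain g where g: "induced_iso V G (toggle L E) (g \<circ> f)" "\<forall>u. g (Phi,u) = (Phi,u)"
    using toggle_lemma[OF finL _ Ef(1)] unfolding L_def by blast
  have supH: "\<And>x y. H x y \<Longrightarrow> x \<in> V \<and> y \<in> V"
    using lsgH unfolding looped_simple_graph_def by blast+
  have Heq: "toggle L E = H"
  proof (intro ext)
    fix x y
    show "toggle L E x y = H x y"
    proof (cases "x \<in> V \<and> y \<in> V")
      case True
      show ?thesis
      proof (cases "x = y")
        case True then show ?thesis unfolding toggle_def L_def using \<open>x \<in> V \<and> y \<in> V\<close> by auto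
      next
        case False
        then show ?thesis using Hdef[of x y] key[of x y] symE[of x y] \<open>x \<in> V \<and> y \<in> V\<close>
          unfolding toggle_def by auto
      qed
    next
      case False
      then show ?thesis using supH[of x y] supE[of x y] unfolding toggle_def L_def by auto
    qed
  qed
  have iso: "induced_iso V G H (g \<circ> f)" using g(1) Heq by simp
  have img: "(g \<circ> f) ` B = Phis V"
  proof -
    have "g ` Phis V = Phis V" using g(2) unfolding Phis_img image_comp o_def by simp
    moreover have "(g \<circ> f) ` B = g ` (f ` B)" by (rule image_comp[symmetric])
    ultimately show ?thesis using Ef(2) by simp
  qed
  have le: "locally_equivalent V G H" using induced_props[OF iso lsgG] by blast
  have sym: "\<forall>v\<in>V. \<forall>w\<in>V. v \<noteq> w \<longrightarrow>
            (pick B w \<in> fund_circuit V G B (pick C v) \<longleftrightarrow> pick B v \<in> fund_circuit V G B (pick C w))"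
    using key symE by auto
  show ?thesis using sym le iso img by blast
qed

end
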